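(* Let $\{\delta_q\}_{q\in\Sigma}$ be a Delta-basis of $\mathfrak{U}(\mathbb{R})$ with dual Sigma-basis $\{\sigma_q\}_{q\in\Sigma}$. For every $u\in[L^1_{loc}(\mathbb{R})]^*$ there is a unique $\widetilde{u}\in\mathfrak{U}(\mathbb{R})$ such that $\int^*\widetilde{u}v\,dx=\int^*uv\,dx$ for all $v\in\mathfrak{U}(\mathbb{R})$, and $$\widetilde{u}(x)=\sum_{q\in\Sigma}\left[\int^*u(\xi)\delta_q(\xi)d\xi\right]\sigma_q(x)=\sum_{q\in\Sigma}\left[\int^*u(\xi)\sigma_q(\xi)d\xi\right]\delta_q(x).$$
   Context: Framework (Λ-limits / nonstandard analysis): $\mathfrak{X}=\mathcal{P}_{fin}(\mathfrak{F}(\mathbb{R},\mathbb{R}))$ directed by inclusion; $\mathbb{R}^*\supset\mathbb{R}$ is a non-Archimedean ordered field of Λ-limits of nets $\mathfrak{X}\to\mathbb{R}$; internal sets/functions, natural extensions $E^*,f^*$, hyperfinite sums are defined via Λ-limits; $\int^*$ is the natural extension of the Lebesgue integral. For $\lambda\in\mathfrak{X}$, $V_\lambda$ is the span of $\lambda$; an internal $u=\lim_{\lambda\uparrow\Lambda}u_\lambda$ is an ultrafunction if $u_\lambda\in V_\lambda$ for all $\lambda$; for a vector space $W$ of real functions, $\widetilde{W}=W^*\cap\{\text{ultrafunctions}\}$. Grid: a positive infinite $\beta\in\mathbb{R}^*$, a hyperfinite $\Gamma=\{\gamma_0<\dots<\gamma_\ell\}\subset\mathbb{R}^*$ with $\gamma_0=-\beta$,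 $\gamma_\ell=\beta$, $0<\gamma_{j+1}-\gamma_j<\eta$ for a fixed infinitesimal $\eta$, and $\mathbb{R}\subseteq\Gamma$; $\mathbb{I}_j=(\gamma_j,\gamma_{j+1})_{\mathbb{R}^*}$ with characteristic function $\chi_j$. $\mathfrak{U}(\mathbb{R})$: functions $u:[-\beta,\beta]\to\mathbb{R}^*$ of the form $\sum_{j=0}^{\ell-1}v_j\chi_j$ with $v_j\in\widetilde{\mathcal{C}^1(\mathbb{R})}$ (extended by $0$ outside $[-\beta,\beta]$ when integrating against functions on $\mathbb{R}^*$). Values at grid points: $u(\gamma_j)=\tfrac12(u(\gamma_j^+)+u(\gamma_j^-))$ for $1\le j\le\ell-1$, $u(-\beta)=u(\gamma_0^+)$, $u(\beta)=u(\gamma_\ell^-)$. For $q\in[-\beta,\beta]$, $\delta_q$ is the unique element of $\mathfrak{U}(\mathbb{R})$ with $\int^*v\delta_q=v(q)$ for all $v\in\mathfrak{U}(\mathbb{R})$. A Delta-basis is a basis $\{\delta_a\}_{a\in\Sigma}$ of $\mathfrak{U}(\mathbb{R})$ of such functions; its dual basis $\{\sigma_a\}_{a\in\Sigma}$ ($\int^*\delta_a\sigma_b=\delta_{ab}$) is the Sigma-basis. *)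

theory Defs
  imports "HOL-Analysis.Analysis"
begin

text \<open>Lambda-limits are modelled by a fine ultrafilter F on the index type of
finite sets of real functions. A hyperreal is represented by a net (idx => real);
internal functions by nets of real functions; everything is compared modulo F.\<close>

type_synonym idx = "(real \<Rightarrow> real) set"
type_synonym hr = "idx \<Rightarrow> real"
type_synonym ifun = "idx \<Rightarrow> real \<Rightarrow> real"

definition fine_ultrafilter :: "idx filter \<Rightarrow> bool" where
  "fine_ultrafilter F \<longleftrightarrow> F \<noteq> bot \<and>
     (\<forall>P. eventually P F \<or> eventually (\<lambda>l. \<not> P l) F) \<and>
     (\<forall>l0. finite l0 \<longrightarrow> eventually (\<lambda>l. finite l \<and> l0 \<subseteq> l) F)"

definition heq :: "idx filter \<Rightarrow> hr \<Rightarrow> hr \<Rightarrow> bool" where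
  "heq F a b \<longleftrightarrow> eventually (\<lambda>l. a l = b l) F"

text \<open>Grid assumptions: beta positive infinite, eta positive infinitesimal,
Gamma hyperfinite with endpoints -beta, beta, mesh < eta, containing all reals.\<close>
definition grid_ok :: "idx filter \<Rightarrow> hr \<Rightarrow> hr \<Rightarrow> (idx \<Rightarrow> real set) \<Rightarrow> bool" where
  "grid_ok F \<beta> \<eta> G \<longleftrightarrow>
     (\<forall>n::nat. eventually (\<lambda>l. real n < \<beta> l) F) \<and>
     eventually (\<lambda>l. 0 < \<eta> l) F \<and>
     (\<forall>n::nat. eventually (\<lambda>l. \<eta> l < 1 / real (Suc n)) F) \<and>
     eventually (\<lambda>l. finite (G l) \<and> G l \<noteq> {} \<and> Min (G l) = - \<beta> l \<and> Max (G l) = \<beta> l) F \<and>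
     eventually (\<lambda>l. \<forall>x\<in>G l. \<forall>y\<in>G l. x < y \<and> (\<forall>z\<in>G l. \<not> (x < z \<and> z < y))
                       \<longrightarrow> y - x < \<eta> l) F \<and>
     (\<forall>r::real. eventually (\<lambda>l. r \<in> G l) F)"

definition Vspan :: "idx \<Rightarrow> (real \<Rightarrow> real) set" where
  "Vspan l = {f. \<exists>c. f = (\<lambda>x. \<Sum>g\<in>l. c g * g x)}"

definition C1 :: "(real \<Rightarrow> real) set" where
  "C1 = {f. \<exists>f'. (\<forall>x. (f has_real_derivative f' x) (at x)) \<and> continuous_on UNIV f'}"

definition L1loc :: "(real \<Rightarrow> real) set" where
  "L1loc = {f. f \<in> borel_measurable lborel \<and> (\<forall>a b. set_integrable lborel {a..b} f)}"

definition grid_pt :: "real set \<Rightarrow> nat \<Rightarrow> real" where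
  "grid_pt G j = sorted_list_of_set G ! j"

definition grid_len :: "real set \<Rightarrow> nat" where
  "grid_len G = card G - 1"

text \<open>The function sum_j v_j chi_j with the prescribed values at grid points
(average of one-sided limits inside, one-sided values at the endpoints),
extended by 0 outside [gamma_0, gamma_ell].\<close>
definition pw_val :: "real set \<Rightarrow> (nat \<Rightarrow> real \<Rightarrow> real) \<Rightarrow> real \<Rightarrow> real" where
  "pw_val G v x =
     (let n = grid_len G in
      if x \<in> G then
        (let j = (THE j. j \<le> n \<and> grid_pt G j = x) in
         if j = 0 then v 0 x
         else if j = n then v (n - 1) x
         else (v (j - 1) x + v j x) / 2)
      else (\<Sum>j<n. if grid_pt G j < x \<and> x < grid_pt G (Suc j) then v j x else 0))"

definition Ulevel :: "idx \<Rightarrow> real set \<Rightarrow> (real \<Rightarrow> real) set" where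
  "Ulevel l G = {f. \<exists>v. (\<forall>j < grid_len G. v j \<in> C1 \<and> v j \<in> Vspan l) \<and> f = pw_val G v}"

definition inU :: "idx filter \<Rightarrow> (idx \<Rightarrow> real set) \<Rightarrow> ifun \<Rightarrow> bool" where
  "inU F G u \<longleftrightarrow> eventually (\<lambda>l. u l \<in> Ulevel l (G l)) F"

definition inL1locStar :: "idx filter \<Rightarrow> ifun \<Rightarrow> bool" where
  "inL1locStar F u \<longleftrightarrow> eventually (\<lambda>l. u l \<in> L1loc) F"

definition app :: "ifun \<Rightarrow> hr \<Rightarrow> hr" where
  "app u x = (\<lambda>l. u l (x l))"

definition hint :: "ifun \<Rightarrow> ifun \<Rightarrow> hr" where
  "hint u v = (\<lambda>l. integral\<^sup>L lborel (\<lambda>x. u l x * v l x))"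

definition in_hint :: "idx filter \<Rightarrow> hr \<Rightarrow> hr \<Rightarrow> bool" where
  "in_hint F \<beta> x \<longleftrightarrow> eventually (\<lambda>l. - \<beta> l \<le> x l \<and> x l \<le> \<beta> l) F"

definition hmem :: "idx filter \<Rightarrow> hr \<Rightarrow> (idx \<Rightarrow> real set) \<Rightarrow> bool" where
  "hmem F q S \<longleftrightarrow> eventually (\<lambda>l. q l \<in> S l) F"

definition feq :: "idx filter \<Rightarrow> hr \<Rightarrow> ifun \<Rightarrow> ifun \<Rightarrow> bool" where
  "feq F \<beta> u w \<longleftrightarrow> (\<forall>x. in_hint F \<beta> x \<longrightarrow> heq F (app u x) (app w x))"

definition fam :: "(idx \<Rightarrow> real \<Rightarrow> real \<Rightarrow> real) \<Rightarrow> hr \<Rightarrow> ifun" where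
  "fam d q = (\<lambda>l. d l (q l))"

definition is_delta :: "idx filter \<Rightarrow> (idx \<Rightarrow> real set) \<Rightarrow> hr \<Rightarrow> ifun \<Rightarrow> bool" where
  "is_delta F G q dq \<longleftrightarrow> inU F G dq \<and>
     (\<forall>v. inU F G v \<longrightarrow> heq F (hint v dq) (app v q))"

definition delta_basis :: "idx filter \<Rightarrow> hr \<Rightarrow> (idx \<Rightarrow> real set) \<Rightarrow> (idx \<Rightarrow> real set)
      \<Rightarrow> (idx \<Rightarrow> real \<Rightarrow> real \<Rightarrow> real) \<Rightarrow> bool" where
  "delta_basis F \<beta> G S d \<longleftrightarrow>
     eventually (\<lambda>l. finite (S l)) F \<and>
     (\<forall>q. hmem F q S \<longrightarrow> in_hint F \<beta> q \<and> is_delta F G q (fam d q)) \<and>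
     (\<forall>v. inU F G v \<longrightarrow> (\<exists>c :: idx \<Rightarrow> real \<Rightarrow> real.
        feq F \<beta> v (\<lambda>l x. \<Sum>a\<in>S l. c l a * d l a x))) \<and>
     (\<forall>c :: idx \<Rightarrow> real \<Rightarrow> real.
        feq F \<beta> (\<lambda>l x. \<Sum>a\<in>S l. c l a * d l a x) (\<lambda>l x. 0) \<longrightarrow>
        (\<forall>q. hmem F q S \<longrightarrow> heq F (\<lambda>l. c l (q l)) (\<lambda>l. 0)))"

definition dual_basis :: "idx filter \<Rightarrow> (idx \<Rightarrow> real set) \<Rightarrow> (idx \<Rightarrow> real set)
      \<Rightarrow> (idx \<Rightarrow> real \<Rightarrow> real \<Rightarrow> real) \<Rightarrow> (idx \<Rightarrow> real \<Rightarrow> real \<Rightarrow> real) \<Rightarrow> bool" where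
  "dual_basis F G S d s \<longleftrightarrow>
     (\<forall>q. hmem F q S \<longrightarrow> inU F G (fam s q)) \<and>
     (\<forall>a b. hmem F a S \<longrightarrow> hmem F b S \<longrightarrow>
        heq F (hint (fam d a) (fam s b)) (\<lambda>l. if a l = b l then 1 else 0))"

end

theory Submission
  imports Defs
begin

definition nice :: "(real \<Rightarrow> real) \<Rightarrow> bool" where
  "nice f \<longleftrightarrow> f \<in> borel_measurable borel \<and> (\<exists>C a b. \<forall>x. \<bar>f x\<bar> \<le> C * indicator {a..b} x)"

lemma nice_L1: assumes "nice f" and "w \<in> L1loc"
  shows "integrable lborel (\<lambda>x. w x * f x)" "integrable lborel (\<lambda>x. f x * w x)"
proof -
  obtain C a b where Cb: "\<And>x. \<bar>f x\<bar> \<le> C * indicator {a..b} x" and fm: "f \<in> borel_measurable borel"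
    using assms(1) unfolding nice_def by blast
  have wm: "w \<in> borel_measurable borel" and si: "set_integrable lborel {a..b} w"
    using assms(2) unfolding L1loc_def by auto
  have i1: "integrable lborel (\<lambda>x. C * \<bar>indicator {a..b} x *\<^sub>R w x\<bar>)"
    using si unfolding set_integrable_def by auto
  have "integrable lborel (\<lambda>x. w x * f x)"
  proof (rule Bochner_Integration.integrable_bound[OF i1])
    show "(\<lambda>x. w x * f x) \<in> borel_measurable lborel" using wm fm by simp
    show "AE x in lborel. norm (w x * f x) \<le> norm (C * \<bar>indicator {a..b} x *\<^sub>R w x\<bar>)"
    proof (rule AE_I2)
      fix x
      have "\<bar>w x * f x\<bar> = \<bar>w x\<bar> * \<bar>f x\<bar>" by (simp add: abs_mult)
      also have "\<dots> \<le> \<bar>w x\<bar> * (C * indicator {a..b} x)" using Cb[of x] by (simp add: mult_left_mono)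
      also have "\<dots> \<le> \<bar>C * \<bar>indicator {a..b} x *\<^sub>R w x\<bar>\<bar>"
        by (simp add: abs_mult indicator_def mult.commute mult_right_mono)
      finally show "norm (w x * f x) \<le> norm (C * \<bar>indicator {a..b} x *\<^sub>R w x\<bar>)" by simp
    qed
  qed
  then show "integrable lborel (\<lambda>x. w x * f x)" .
  then show "integrable lborel (\<lambda>x. f x * w x)" by (simp add: mult.commute)
qed

lemma nice_L1loc: assumes "nice f" shows "f \<in> L1loc"
proof -
  obtain C a b where Cb: "\<And>x. \<bar>f x\<bar> \<le> C * indicator {a..b} x" and fm: "f \<in> borel_measurable borel"
    using assms(1) unfolding nice_def by blast
  have i0: "integrable lborel (\<lambda>x. C * indicator {a..b} x)" by (intro integrable_mult_right integrable_real_indicator) (auto simp: emeasure_lborel_Icc_eq)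
  have "set_integrable lborel {c..d} f" for c d
    unfolding set_integrable_def
  proof (rule Bochner_Integration.integrable_bound[OF i0])
    show "(\<lambda>x. indicator {c..d} x *\<^sub>R f x) \<in> borel_measurable lborel" using fm by simp
    show "AE x in lborel. norm (indicator {c..d} x *\<^sub>R f x) \<le> norm (C * indicator {a..b} x)"
    proof (rule AE_I2)
      fix x
      have "norm (indicator {c..d} x *\<^sub>R f x) \<le> \<bar>f x\<bar>" by (simp add: indicator_def)
      also have "\<dots> \<le> \<bar>C * indicator {a..b} x\<bar>" using Cb[of x] by linarith
      finally show "norm (indicator {c..d} x *\<^sub>R f x) \<le> norm (C * indicator {a..b} x)" by simp
    qed
  qed
  then show ?thesis using fm unfolding L1loc_def by simp
qed

lemma int_lin: fixes w :: "real \<Rightarrow> real" and g :: "'a \<Rightarrow> real \<Rightarrow> real" and c :: "'a \<Rightarrow> real"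
  assumes "finite A" "\<And>a. a \<in> A \<Longrightarrow> integrable lborel (\<lambda>x. w x * g a x)"
  shows "integral\<^sup>L lborel (\<lambda>x. w x * (\<Sum>a\<in>A. c a * g a x)) = (\<Sum>a\<in>A. c a * integral\<^sup>L lborel (\<lambda>x. w x * g a x))"
proof -
  have "(\<lambda>x. w x * (\<Sum>a\<in>A. c a * g a x)) = (\<lambda>x. \<Sum>a\<in>A. c a * (w x * g a x))"
    by (simp add: sum_distrib_left mult.left_commute)
  then show ?thesis using assms by (simp add: integral_sum)
qed


lemma pw_val_lin: "pw_val G (\<lambda>j x. a * v1 j x + b * v2 j x) x = a * pw_val G v1 x + b * pw_val G v2 x"
proof (cases "x \<in> G")
  case True
  then show ?thesis unfolding pw_val_def Let_def by (simp add: algebra_simps add_divide_distrib)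
next
  case False
  have "(\<Sum>j<grid_len G. if grid_pt G j < x \<and> x < grid_pt G (Suc j) then a * v1 j x + b * v2 j x else 0)
     = (\<Sum>j<grid_len G. a * (if grid_pt G j < x \<and> x < grid_pt G (Suc j) then v1 j x else 0) + b * (if grid_pt G j < x \<and> x < grid_pt G (Suc j) then v2 j x else 0))"
    by (rule sum.cong) auto
  then show ?thesis using False unfolding pw_val_def Let_def by (simp add: sum.distrib sum_distrib_left)
qed

lemma pw_val_zero: "pw_val G (\<lambda>j x. 0) = (\<lambda>x. 0)"
  unfolding pw_val_def Let_def by (rule ext) simp

lemma C1_lin: assumes "f \<in> C1" "g \<in> C1" shows "(\<lambda>x. a * f x + b * g x) \<in> C1"
proof -
  obtain f' where f: "\<And>x. (f has_real_derivative f' x) (at x)" "continuous_on UNIV f'" using assms(1) unfolding C1_def by blast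
  obtain g' where g: "\<And>x. (g has_real_derivative g' x) (at x)" "continuous_on UNIV g'" using assms(2) unfolding C1_def by blast
  have "\<And>x. ((\<lambda>x. a * f x + b * g x) has_real_derivative (a * f' x + b * g' x)) (at x)"
    using DERIV_add[OF DERIV_cmult[OF f(1)] DERIV_cmult[OF g(1)]] by simp
  moreover have "continuous_on UNIV (\<lambda>x. a * f' x + b * g' x)"
    by (intro continuous_intros f g)
  ultimately show ?thesis unfolding C1_def by (intro CollectI exI[of _ "\<lambda>x. a * f' x + b * g' x"]) auto
qed

lemma Vspan_lin: assumes "f \<in> Vspan l" "g \<in> Vspan l" shows "(\<lambda>x. a * f x + b * g x) \<in> Vspan l"
proof -
  obtain c1 where c1: "f = (\<lambda>x. \<Sum>h\<in>l. c1 h * h x)" using assms(1) unfolding Vspan_def by blast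
  obtain c2 where c2: "g = (\<lambda>x. \<Sum>h\<in>l. c2 h * h x)" using assms(2) unfolding Vspan_def by blast
  have "(\<lambda>x. a * f x + b * g x) = (\<lambda>x. \<Sum>h\<in>l. (a * c1 h + b * c2 h) * h x)"
    unfolding c1 c2 by (simp add: sum_distrib_left sum.distrib algebra_simps)
  then show ?thesis unfolding Vspan_def by (intro CollectI exI[of _ "\<lambda>h. a * c1 h + b * c2 h"])
qed

lemma Ulevel_zero: "(\<lambda>x. 0) \<in> Ulevel l G"
proof -
  have "(\<lambda>x. 0::real) \<in> C1" unfolding C1_def by (rule CollectI, rule exI[of _ "\<lambda>x. 0"]) auto
  moreover have "(\<lambda>x. 0::real) \<in> Vspan l" unfolding Vspan_def by (rule CollectI, rule exI[of _ "\<lambda>x. 0"]) auto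
  ultimately show ?thesis unfolding Ulevel_def using pw_val_zero[of G]
    by (intro CollectI exI[of _ "\<lambda>j x. 0"]) auto
qed

lemma Ulevel_lin: assumes "f \<in> Ulevel l G" "g \<in> Ulevel l G" shows "(\<lambda>x. a * f x + b * g x) \<in> Ulevel l G"
proof -
  obtain v1 where v1: "\<forall>j < grid_len G. v1 j \<in> C1 \<and> v1 j \<in> Vspan l" "f = pw_val G v1" using assms(1) unfolding Ulevel_def by blast
  obtain v2 where v2: "\<forall>j < grid_len G. v2 j \<in> C1 \<and> v2 j \<in> Vspan l" "g = pw_val G v2" using assms(2) unfolding Ulevel_def by blast
  show ?thesis unfolding Ulevel_def
    apply (rule CollectI, rule exI[of _ "\<lambda>j x. a * v1 j x + b * v2 j x"])
    using v1 v2 by (auto simp: pw_val_lin C1_lin Vspan_lin)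
qed

lemma Ulevel_sum: assumes "finite A" "\<And>a. a \<in> A \<Longrightarrow> f a \<in> Ulevel l G"
  shows "(\<lambda>x. \<Sum>a\<in>A. c a * f a x) \<in> Ulevel l G"
  using assms
proof (induction A rule: finite_induct)
  case empty then show ?case using Ulevel_zero by simp
next
  case (insert a A)
  have "(\<lambda>x. c a * f a x + 1 * (\<Sum>a\<in>A. c a * f a x)) \<in> Ulevel l G"
    by (rule Ulevel_lin) (use insert in auto)
  then show ?case using insert by simp
qed


lemma C1_cont: assumes "f \<in> C1" shows "continuous_on UNIV f"
proof -
  obtain f' where "\<And>x. (f has_real_derivative f' x) (at x)" using assms unfolding C1_def by blast
  then show ?thesis by (intro continuous_at_imp_continuous_on ballI) (rule DERIV_isCont)
qed

lemma grid_pt_in: assumes "finite G" "j \<le> grid_len G" "G \<noteq> {}" shows "grid_pt G j \<in> G"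
proof -
  have "card G > 0" using assms by (simp add: card_gt_0_iff)
  then have "j < length (sorted_list_of_set G)" using assms(2) unfolding grid_len_def by simp
  then show ?thesis unfolding grid_pt_def using assms(1) by (metis nth_mem set_sorted_list_of_set)
qed

lemma grid_THE: assumes "finite G" "x \<in> G"
  shows "(THE j. j \<le> grid_len G \<and> grid_pt G j = x) \<le> grid_len G"
proof -
  let ?xs = "sorted_list_of_set G"
  have len: "length ?xs = grid_len G + 1" using assms unfolding grid_len_def
    by (metis Suc_eq_plus1 Suc_pred' card_gt_0_iff empty_iff length_sorted_list_of_set)
  obtain j where j: "j < length ?xs" "?xs ! j = x" using assms by (metis in_set_conv_nth set_sorted_list_of_set)
  have "(THE j. j \<le> grid_len G \<and> grid_pt G j = x) = j"
  proof (rule the_equality)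
    show "j \<le> grid_len G \<and> grid_pt G j = x" using j len unfolding grid_pt_def by simp
    fix i assume "i \<le> grid_len G \<and> grid_pt G i = x"
    then have "i < length ?xs" "?xs ! i = ?xs ! j" using j len unfolding grid_pt_def by auto
    then show "i = j" using j distinct_sorted_list_of_set[of G] nth_eq_iff_index_eq by blast
  qed
  then show ?thesis using j len by simp
qed

lemma pw_bound:
  assumes fin: "finite G" and n: "grid_len G \<ge> 1"
  shows "\<bar>pw_val G v x\<bar> \<le> (\<Sum>j<grid_len G. \<bar>v j x\<bar>)"
    and "x \<notin> {Min G..Max G} \<Longrightarrow> pw_val G v x = 0"
proof -
  let ?n = "grid_len G"
  let ?S = "\<Sum>j<grid_len G. \<bar>v j x\<bar>"
  have Gne: "G \<noteq> {}" using n unfolding grid_len_def by auto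
  have mem: "\<And>j. j < ?n \<Longrightarrow> \<bar>v j x\<bar> \<le> ?S" by (rule member_le_sum) auto
  show "\<bar>pw_val G v x\<bar> \<le> ?S"
  proof (cases "x \<in> G")
    case True
    define j where "j = (THE j. j \<le> ?n \<and> grid_pt G j = x)"
    have jn: "j \<le> ?n" unfolding j_def by (rule grid_THE[OF fin True])
    have pw: "pw_val G v x = (if j = 0 then v 0 x else if j = ?n then v (?n - 1) x else (v (j - 1) x + v j x) / 2)"
      unfolding pw_val_def Let_def j_def using True by simp
    show ?thesis
    proof (cases "j = 0")
      case True then show ?thesis using pw mem[of 0] n by simp
    next
      case False
      show ?thesis
      proof (cases "j = ?n")
        case True then show ?thesis using pw mem[of "?n - 1"] n False by simp
      next
        case False2: False
        have "j - 1 < ?n" "j < ?n" using jn False False2 by auto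
        then have "\<bar>v (j - 1) x\<bar> \<le> ?S" "\<bar>v j x\<bar> \<le> ?S" using mem by auto
        then show ?thesis using pw False False2 by simp
      qed
    qed
  next
    case False
    have "\<bar>pw_val G v x\<bar> = \<bar>\<Sum>j<?n. if grid_pt G j < x \<and> x < grid_pt G (Suc j) then v j x else 0\<bar>"
      unfolding pw_val_def Let_def using False by simp
    also have "\<dots> \<le> (\<Sum>j<?n. \<bar>if grid_pt G j < x \<and> x < grid_pt G (Suc j) then v j x else 0\<bar>)"
      by (rule sum_abs)
    also have "\<dots> \<le> ?S" by (rule sum_mono) auto
    finally show ?thesis .
  qed
  assume out: "x \<notin> {Min G..Max G}"
  have xG: "x \<notin> G" using out fin by auto
  have "\<And>j. j < ?n \<Longrightarrow> \<not> (grid_pt G j < x \<and> x < grid_pt G (Suc j))"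
  proof
    fix j assume j: "j < ?n" and c: "grid_pt G j < x \<and> x < grid_pt G (Suc j)"
    have "grid_pt G j \<in> G" "grid_pt G (Suc j) \<in> G" using grid_pt_in[OF fin _ Gne] j by auto
    then have "Min G \<le> grid_pt G j" "grid_pt G (Suc j) \<le> Max G" using fin by auto
    then show False using c out by auto
  qed
  then have "(\<Sum>j<?n. if grid_pt G j < x \<and> x < grid_pt G (Suc j) then v j x else 0) = 0"
    by (intro sum.neutral) auto
  then show "pw_val G v x = 0" unfolding pw_val_def Let_def using xG by simp
qed

lemma mif: fixes v :: "real \<Rightarrow> real" assumes "v \<in> borel_measurable borel" shows "(\<lambda>x. if (a::real) < x \<and> x < b then v x else 0) \<in> borel_measurable borel"
  using assms by measurable

lemma Ulevel_nice:
  assumes fin: "finite G" and n: "grid_len G \<ge> 1" and f: "f \<in> Ulevel l G"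
  shows "nice f" "\<And>x. x \<notin> {Min G..Max G} \<Longrightarrow> f x = 0"
proof -
  obtain v where v: "\<forall>j < grid_len G. v j \<in> C1 \<and> v j \<in> Vspan l" and fv: "f = pw_val G v"
    using f unfolding Ulevel_def by blast
  let ?n = "grid_len G"
  show "\<And>x. x \<notin> {Min G..Max G} \<Longrightarrow> f x = 0" using pw_bound(2)[OF fin n] fv by simp
  have cont: "\<And>j. j < ?n \<Longrightarrow> continuous_on UNIV (v j)" using v C1_cont by blast
  have cS: "continuous_on {Min G..Max G} (\<lambda>x. \<Sum>j<?n. \<bar>v j x\<bar>)"
    by (intro continuous_intros continuous_on_subset[OF cont]) auto
  have cpt: "compact ((\<lambda>x. \<Sum>j<?n. \<bar>v j x\<bar>) ` {Min G..Max G})"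
    by (rule compact_continuous_image[OF cS]) simp
  obtain M where M0: "\<forall>y\<in>(\<lambda>x. \<Sum>j<?n. \<bar>v j x\<bar>) ` {Min G..Max G}. norm y \<le> M"
    using compact_imp_bounded[OF cpt] unfolding bounded_iff by blast
  have M: "\<And>x. x \<in> {Min G..Max G} \<Longrightarrow> norm (\<Sum>j<?n. \<bar>v j x\<bar>) \<le> M"
    using M0 by blast
  have bnd: "\<bar>f x\<bar> \<le> M * indicator {Min G..Max G} x" for x
  proof (cases "x \<in> {Min G..Max G}")
    case True
    then show ?thesis using pw_bound(1)[OF fin n, of v x] M[OF True] fv by simp
  next
    case False then show ?thesis using pw_bound(2)[OF fin n False] fv by simp
  qed
  define B where "B = (\<lambda>x. \<Sum>j<?n. if grid_pt G j < x \<and> x < grid_pt G (Suc j) then v j x else 0)"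
  have Bm: "B \<in> borel_measurable borel"
    unfolding B_def
  proof (intro borel_measurable_sum)
    fix j assume "j \<in> {..<?n}"
    then have "v j \<in> borel_measurable borel" using cont borel_measurable_continuous_onI by auto
    then show "(\<lambda>x. if grid_pt G j < x \<and> x < grid_pt G (Suc j) then v j x else 0) \<in> borel_measurable borel"
      using mif by blast
  qed
  have "f \<in> borel_measurable borel"
  proof (rule measurable_discrete_difference[OF Bm])
    show "countable G" using fin by (simp add: countable_finite)
    show "\<And>x. x \<in> G \<Longrightarrow> {x} \<in> sets borel" by simp
    show "\<And>x. x \<in> G \<Longrightarrow> f x \<in> space borel" by simp
    show "\<And>x. x \<in> space borel \<Longrightarrow> x \<notin> G \<Longrightarrow> B x = f x"
      unfolding B_def fv pw_val_def Let_def by simp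
  qed
  then show "nice f" unfolding nice_def using bnd by blast
qed


lemma uf_all:
  assumes uf: "fine_ultrafilter F"
    and h: "\<And>q. eventually (\<lambda>l. q l \<in> S l) F \<Longrightarrow> eventually (\<lambda>l. Q l (q l)) F"
  shows "eventually (\<lambda>l. \<forall>y\<in>S l. Q l y) F"
proof (rule ccontr)
  assume n: "\<not> ?thesis"
  with uf have e: "eventually (\<lambda>l. \<not> (\<forall>y\<in>S l. Q l y)) F" unfolding fine_ultrafilter_def by blast
  define q where "q l = (SOME y. y \<in> S l \<and> \<not> Q l y)" for l
  have e2: "eventually (\<lambda>l. q l \<in> S l \<and> \<not> Q l (q l)) F"
  proof (rule eventually_mono[OF e])
    fix l assume "\<not> (\<forall>y\<in>S l. Q l y)"
    then have "\<exists>y. y \<in> S l \<and> \<not> Q l y" by blast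
    then show "q l \<in> S l \<and> \<not> Q l (q l)" unfolding q_def by (rule someI_ex)
  qed
  then have "eventually (\<lambda>l. q l \<in> S l) F" by (rule eventually_mono) simp
  from h[OF this] e2 have "eventually (\<lambda>l. False) F"
    by (auto elim: eventually_elim2)
  then show False using uf unfolding fine_ultrafilter_def by (simp add: eventually_False)
qed

lemma key:
  assumes "finite S" "\<forall>a\<in>S. \<forall>b\<in>S. integral\<^sup>L lborel (\<lambda>x. p a x * r b x) = (if a = b then 1 else 0)"
    "\<forall>a\<in>S. nice (p a)" "\<forall>b\<in>S. nice (r b)" "b \<in> S"
  shows "integral\<^sup>L lborel (\<lambda>x. (\<Sum>a\<in>S. c a * p a x) * r b x) = c b"
proof -
  have "integral\<^sup>L lborel (\<lambda>x. (\<Sum>a\<in>S. c a * p a x) * r b x)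
      = integral\<^sup>L lborel (\<lambda>x. r b x * (\<Sum>a\<in>S. c a * p a x))" by (simp add: mult.commute)
  also have "\<dots> = (\<Sum>a\<in>S. c a * integral\<^sup>L lborel (\<lambda>x. r b x * p a x))"
    by (rule int_lin[OF assms(1)]) (use assms(3,4,5) nice_L1 nice_L1loc in blast)
  also have "\<dots> = (\<Sum>a\<in>S. c a * (if a = b then 1 else 0))"
  proof (rule sum.cong[OF refl])
    fix a assume "a \<in> S"
    then have "integral\<^sup>L lborel (\<lambda>x. r b x * p a x) = (if a = b then 1 else 0)"
      using assms(2,5) by (simp add: mult.commute)
    then show "c a * integral\<^sup>L lborel (\<lambda>x. r b x * p a x) = c a * (if a = b then 1 else 0)" by simp
  qed
  also have "\<dots> = (\<Sum>a\<in>S. if a = b then c a else 0)" by (rule sum.cong) auto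
  also have "\<dots> = c b" using assms(1,5) by simp
  finally show ?thesis .
qed

lemma grid_len_ge1: assumes "finite G" "G \<noteq> {}" "Min G < Max G" shows "grid_len G \<ge> 1"
proof -
  have "card G \<noteq> 0" using assms by simp
  moreover have "card G \<noteq> 1"
  proof
    assume "card G = 1"
    then obtain a where "G = {a}" by (rule card_1_singletonE)
    then show False using assms(3) by simp
  qed
  ultimately show ?thesis unfolding grid_len_def by simp
qed


theorem mainTheorem6:
  fixes F :: "idx filter" and \<beta> \<eta> :: hr and G S :: "idx \<Rightarrow> real set"
    and d s :: "idx \<Rightarrow> real \<Rightarrow> real \<Rightarrow> real" and u :: ifun
  assumes "fine_ultrafilter F"
    and "grid_ok F \<beta> \<eta> G"
    and "delta_basis F \<beta> G S d"
    and "dual_basis F G S d s"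
    and "inL1locStar F u"
  shows "(\<exists>ut. inU F G ut \<and> (\<forall>v. inU F G v \<longrightarrow> heq F (hint ut v) (hint u v)) \<and>
            (\<forall>x. in_hint F \<beta> x \<longrightarrow>
               heq F (app ut x) (\<lambda>l. \<Sum>q\<in>S l. hint u (fam d (\<lambda>_. q)) l * s l q (x l)) \<and>
               heq F (app ut x) (\<lambda>l. \<Sum>q\<in>S l. hint u (fam s (\<lambda>_. q)) l * d l q (x l))))
       \<and> (\<forall>w1 w2. inU F G w1 \<and> (\<forall>v. inU F G v \<longrightarrow> heq F (hint w1 v) (hint u v)) \<and>
                  inU F G w2 \<and> (\<forall>v. inU F G v \<longrightarrow> heq F (hint w2 v) (hint u v))
                  \<longrightarrow> feq F \<beta> w1 w2)"
proof -
  note uf = assms(1)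
  define good where "good l \<longleftrightarrow> finite (S l) \<and> finite (G l) \<and> grid_len (G l) \<ge> 1 \<and>
     Min (G l) = - \<beta> l \<and> Max (G l) = \<beta> l \<and>
     (\<forall>q\<in>S l. d l q \<in> Ulevel l (G l)) \<and> (\<forall>q\<in>S l. s l q \<in> Ulevel l (G l)) \<and>
     (\<forall>a\<in>S l. \<forall>b\<in>S l. integral\<^sup>L lborel (\<lambda>x. d l a x * s l b x) = (if a = b then 1 else 0)) \<and>
     u l \<in> L1loc" for l
  have db: "eventually (\<lambda>l. finite (S l)) F"
     "\<And>q. hmem F q S \<Longrightarrow> in_hint F \<beta> q \<and> is_delta F G q (fam d q)"
     "\<And>v. inU F G v \<Longrightarrow> (\<exists>c :: idx \<Rightarrow> real \<Rightarrow> real. feq F \<beta> v (\<lambda>l x. \<Sum>a\<in>S l. c l a * d l a x))"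
    using assms(3) unfolding delta_basis_def by blast+
  have dual: "\<And>q. hmem F q S \<Longrightarrow> inU F G (fam s q)"
    "\<And>a b. hmem F a S \<Longrightarrow> hmem F b S \<Longrightarrow>
        heq F (hint (fam d a) (fam s b)) (\<lambda>l. if a l = b l then 1 else 0)"
    using assms(4) unfolding dual_basis_def by blast+
  have e_d: "eventually (\<lambda>l. \<forall>q\<in>S l. d l q \<in> Ulevel l (G l)) F"
    by (rule uf_all[OF uf]) (use db(2) in \<open>auto simp: hmem_def is_delta_def inU_def fam_def\<close>)
  have e_s: "eventually (\<lambda>l. \<forall>q\<in>S l. s l q \<in> Ulevel l (G l)) F"
    by (rule uf_all[OF uf]) (use dual(1) in \<open>auto simp: hmem_def inU_def fam_def\<close>)
  have e_dual: "eventually (\<lambda>l. \<forall>a\<in>S l. \<forall>b\<in>S l. integral\<^sup>L lborel (\<lambda>x. d l a x * s l b x) = (if a = b then 1 else 0)) F"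
  proof (rule uf_all[OF uf])
    fix a assume a: "eventually (\<lambda>l. a l \<in> S l) F"
    show "eventually (\<lambda>l. \<forall>b\<in>S l. integral\<^sup>L lborel (\<lambda>x. d l (a l) x * s l b x) = (if a l = b then 1 else 0)) F"
    proof (rule uf_all[OF uf])
      fix b assume b: "eventually (\<lambda>l. b l \<in> S l) F"
      show "eventually (\<lambda>l. integral\<^sup>L lborel (\<lambda>x. d l (a l) x * s l (b l) x) = (if a l = b l then 1 else 0)) F"
        using dual(2)[of a b] a b by (simp add: hmem_def heq_def hint_def fam_def)
    qed
  qed
  have e_u: "eventually (\<lambda>l. u l \<in> L1loc) F" using assms(5) unfolding inL1locStar_def .
  have go: "(\<forall>n::nat. eventually (\<lambda>l. real n < \<beta> l) F)"
     "eventually (\<lambda>l. finite (G l) \<and> G l \<noteq> {} \<and> Min (G l) = - \<beta> l \<and> Max (G l) = \<beta> l) F"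
    using assms(2) unfolding grid_ok_def by blast+
  have e_g: "eventually (\<lambda>l. finite (G l) \<and> grid_len (G l) \<ge> 1 \<and> Min (G l) = - \<beta> l \<and> Max (G l) = \<beta> l) F"
    using go(2) go(1)[rule_format, of 0]
  proof eventually_elim
    case (elim l)
    then show ?case using grid_len_ge1[of "G l"] by auto
  qed
  have egood: "eventually good F"
    using db(1) e_d e_s e_dual e_u e_g unfolding good_def
    by eventually_elim auto
  have gUn: "good l \<Longrightarrow> f \<in> Ulevel l (G l) \<Longrightarrow> nice f" for l f
    unfolding good_def using Ulevel_nice(1) by blast
  have gU0: "good l \<Longrightarrow> f \<in> Ulevel l (G l) \<Longrightarrow> x \<notin> {- \<beta> l..\<beta> l} \<Longrightarrow> f x = 0" for l f x
    unfolding good_def using Ulevel_nice(2) by metis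
  have expand: "\<exists>c. eventually (\<lambda>l. v l = (\<lambda>x. \<Sum>a\<in>S l. c l a * d l a x)) F" if v: "inU F G v" for v
  proof -
    obtain c where c: "feq F \<beta> v (\<lambda>l x. \<Sum>a\<in>S l. c l a * d l a x)" using db(3)[OF v] by blast
    have e1: "eventually (\<lambda>l. \<forall>y\<in>{- \<beta> l..\<beta> l}. v l y = (\<Sum>a\<in>S l. c l a * d l a y)) F"
    proof (rule uf_all[OF uf])
      fix q assume "eventually (\<lambda>l. q l \<in> {- \<beta> l..\<beta> l}) F"
      then have "in_hint F \<beta> q" unfolding in_hint_def by simp
      then show "eventually (\<lambda>l. v l (q l) = (\<Sum>a\<in>S l. c l a * d l a (q l))) F"
        using c unfolding feq_def heq_def app_def by blast
    qed
    have "eventually (\<lambda>l. v l = (\<lambda>x. \<Sum>a\<in>S l. c l a * d l a x)) F"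
      using e1 egood v[unfolded inU_def]
    proof eventually_elim
      case (elim l)
      have sU: "(\<lambda>x. \<Sum>a\<in>S l. c l a * d l a x) \<in> Ulevel l (G l)"
        by (rule Ulevel_sum) (use elim in \<open>auto simp: good_def\<close>)
      show ?case
      proof
        fix x show "v l x = (\<Sum>a\<in>S l. c l a * d l a x)"
        proof (cases "x \<in> {- \<beta> l..\<beta> l}")
          case True then show ?thesis using elim by blast
        next
          case False
          then show ?thesis using gU0[OF elim(2) elim(3) False] gU0[OF elim(2) sU False] by simp
        qed
      qed
    qed
    then show ?thesis by blast
  qed
  define ut where "ut = (\<lambda>l x. \<Sum>q\<in>S l. hint u (fam d (\<lambda>_. q)) l * s l q x)"
  have hk: "hint u (fam d (\<lambda>_. q)) l = integral\<^sup>L lborel (\<lambda>x. u l x * d l q x)" for q l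
    unfolding hint_def fam_def by simp
  have ut_U: "inU F G ut"
    unfolding inU_def using egood
  proof eventually_elim
    case (elim l) then show ?case unfolding ut_def by (intro Ulevel_sum) (auto simp: good_def)
  qed
  have ut_prop: "heq F (hint ut v) (hint u v)" if v: "inU F G v" for v
  proof -
    obtain c where c: "eventually (\<lambda>l. v l = (\<lambda>x. \<Sum>a\<in>S l. c l a * d l a x)) F" using expand[OF v] by blast
    show ?thesis unfolding heq_def using c egood ut_U[unfolded inU_def]
    proof eventually_elim
      case (elim l)
      have fin: "finite (S l)" and dn: "\<forall>a\<in>S l. nice (d l a)" and sn: "\<forall>a\<in>S l. nice (s l a)"
        and uL: "u l \<in> L1loc"
        using elim gUn by (auto simp: good_def)
      have dual': "\<forall>a\<in>S l. \<forall>b\<in>S l. integral\<^sup>L lborel (\<lambda>x. s l a x * d l b x) = (if a = b then 1 else 0)"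
        using elim(2) unfolding good_def by (auto simp: mult.commute)
      have utn: "nice (ut l)" using gUn elim by blast
      have "hint ut v l = integral\<^sup>L lborel (\<lambda>x. ut l x * (\<Sum>a\<in>S l. c l a * d l a x))"
        unfolding hint_def using elim(1) by simp
      also have "\<dots> = (\<Sum>a\<in>S l. c l a * integral\<^sup>L lborel (\<lambda>x. ut l x * d l a x))"
        by (rule int_lin[OF fin]) (use utn dn nice_L1 nice_L1loc in blast)
      also have "\<dots> = (\<Sum>a\<in>S l. c l a * integral\<^sup>L lborel (\<lambda>x. u l x * d l a x))"
      proof (rule sum.cong[OF refl])
        fix a assume a: "a \<in> S l"
        have "integral\<^sup>L lborel (\<lambda>x. ut l x * d l a x) = hint u (fam d (\<lambda>_. a)) l"
          unfolding ut_def by (rule key[OF fin dual' sn dn a])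
        then show "c l a * integral\<^sup>L lborel (\<lambda>x. ut l x * d l a x) = c l a * integral\<^sup>L lborel (\<lambda>x. u l x * d l a x)"
          using hk by simp
      qed
      also have "\<dots> = integral\<^sup>L lborel (\<lambda>x. u l x * (\<Sum>a\<in>S l. c l a * d l a x))"
        by (rule int_lin[OF fin, symmetric]) (use dn uL nice_L1 in blast)
      also have "\<dots> = hint u v l" unfolding hint_def using elim(1) by simp
      finally show ?case .
    qed
  qed
  have coef: "\<exists>c. eventually (\<lambda>l. w l = (\<lambda>x. \<Sum>a\<in>S l. c l a * d l a x) \<and>
        (\<forall>b\<in>S l. c l b = integral\<^sup>L lborel (\<lambda>x. u l x * s l b x))) F"
    if w: "inU F G w" and wp: "\<forall>v. inU F G v \<longrightarrow> heq F (hint w v) (hint u v)" for w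
  proof -
    obtain c where c: "eventually (\<lambda>l. w l = (\<lambda>x. \<Sum>a\<in>S l. c l a * d l a x)) F" using expand[OF w] by blast
    have e: "eventually (\<lambda>l. \<forall>b\<in>S l. integral\<^sup>L lborel (\<lambda>x. w l x * s l b x) = integral\<^sup>L lborel (\<lambda>x. u l x * s l b x)) F"
    proof (rule uf_all[OF uf])
      fix b assume "eventually (\<lambda>l. b l \<in> S l) F"
      then have "inU F G (fam s b)" using dual(1) unfolding hmem_def by blast
      then show "eventually (\<lambda>l. integral\<^sup>L lborel (\<lambda>x. w l x * s l (b l) x) = integral\<^sup>L lborel (\<lambda>x. u l x * s l (b l) x)) F"
        using wp unfolding heq_def hint_def fam_def by blast
    qed
    have "eventually (\<lambda>l. w l = (\<lambda>x. \<Sum>a\<in>S l. c l a * d l a x) \<and>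
        (\<forall>b\<in>S l. c l b = integral\<^sup>L lborel (\<lambda>x. u l x * s l b x))) F"
      using c e egood
    proof eventually_elim
      case (elim l)
      have fin: "finite (S l)" and dn: "\<forall>a\<in>S l. nice (d l a)" and sn: "\<forall>a\<in>S l. nice (s l a)"
        and du: "\<forall>a\<in>S l. \<forall>b\<in>S l. integral\<^sup>L lborel (\<lambda>x. d l a x * s l b x) = (if a = b then 1 else 0)"
        using elim gUn by (auto simp: good_def)
      have "\<forall>b\<in>S l. c l b = integral\<^sup>L lborel (\<lambda>x. u l x * s l b x)"
      proof
        fix b assume b: "b \<in> S l"
        have "c l b = integral\<^sup>L lborel (\<lambda>x. w l x * s l b x)"
          using key[OF fin du dn sn b, of "c l"] elim(1) by simp
        then show "c l b = integral\<^sup>L lborel (\<lambda>x. u l x * s l b x)" using elim(2) b by simp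
      qed
      then show ?case using elim(1) by simp
    qed
    then show ?thesis by blast
  qed
  have part1: "inU F G ut \<and> (\<forall>v. inU F G v \<longrightarrow> heq F (hint ut v) (hint u v)) \<and>
            (\<forall>x. in_hint F \<beta> x \<longrightarrow>
               heq F (app ut x) (\<lambda>l. \<Sum>q\<in>S l. hint u (fam d (\<lambda>_. q)) l * s l q (x l)) \<and>
               heq F (app ut x) (\<lambda>l. \<Sum>q\<in>S l. hint u (fam s (\<lambda>_. q)) l * d l q (x l)))"
  proof (intro conjI allI impI)
    show "inU F G ut" by (rule ut_U)
    show "\<And>v. inU F G v \<Longrightarrow> heq F (hint ut v) (hint u v)" by (rule ut_prop)
    fix x assume "in_hint F \<beta> x"
    show "heq F (app ut x) (\<lambda>l. \<Sum>q\<in>S l. hint u (fam d (\<lambda>_. q)) l * s l q (x l))"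
      unfolding heq_def app_def ut_def by simp
    obtain c where c: "eventually (\<lambda>l. ut l = (\<lambda>x. \<Sum>a\<in>S l. c l a * d l a x) \<and>
        (\<forall>b\<in>S l. c l b = integral\<^sup>L lborel (\<lambda>x. u l x * s l b x))) F"
      using coef[OF ut_U] ut_prop by blast
    show "heq F (app ut x) (\<lambda>l. \<Sum>q\<in>S l. hint u (fam s (\<lambda>_. q)) l * d l q (x l))"
      unfolding heq_def app_def using c
    proof eventually_elim
      case (elim l)
      then show ?case by (auto simp: hint_def fam_def intro!: sum.cong)
    qed
  qed
  have part2: "\<forall>w1 w2. inU F G w1 \<and> (\<forall>v. inU F G v \<longrightarrow> heq F (hint w1 v) (hint u v)) \<and>
                  inU F G w2 \<and> (\<forall>v. inU F G v \<longrightarrow> heq F (hint w2 v) (hint u v))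
                  \<longrightarrow> feq F \<beta> w1 w2"
  proof (intro allI impI)
    fix w1 w2 assume h: "inU F G w1 \<and> (\<forall>v. inU F G v \<longrightarrow> heq F (hint w1 v) (hint u v)) \<and>
                  inU F G w2 \<and> (\<forall>v. inU F G v \<longrightarrow> heq F (hint w2 v) (hint u v))"
    obtain c1 where c1: "eventually (\<lambda>l. w1 l = (\<lambda>x. \<Sum>a\<in>S l. c1 l a * d l a x) \<and>
        (\<forall>b\<in>S l. c1 l b = integral\<^sup>L lborel (\<lambda>x. u l x * s l b x))) F"
      using coef h by blast
    obtain c2 where c2: "eventually (\<lambda>l. w2 l = (\<lambda>x. \<Sum>a\<in>S l. c2 l a * d l a x) \<and>
        (\<forall>b\<in>S l. c2 l b = integral\<^sup>L lborel (\<lambda>x. u l x * s l b x))) F"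
      using coef h by blast
    have e: "eventually (\<lambda>l. w1 l = w2 l) F" using c1 c2
    proof eventually_elim
      case (elim l) then show ?case by (auto intro!: sum.cong)
    qed
    show "feq F \<beta> w1 w2" unfolding feq_def heq_def app_def
      by (intro allI impI eventually_mono[OF e]) simp
  qed
  show ?thesis using part1 part2 by blast
qed

end
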